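(* Let $k$ be a positive integer. For every integer $n\ge1$, $$D_k^e(n)-D_k^o(n)=\begin{cases}(-1)^m, & \text{if } 1\le n=\tfrac12 m(3m\pm1)\le k-1 \text{ for some integer } m,\\ P_e^{(k)}(d,n)-P_o^{(k)}(d,n), & \text{if } k-1<n\le \tfrac12 k(k-1),\\ 0,&\text{otherwise.}\end{cases}$$
   Context: $D_k(n)$ is the number of partitions of $n$ into non-negative parts (the part $0$ is allowed) in which the smallest part appears exactly $k$ times and no other part is repeated. $D_k^e(n)$ (resp. $D_k^o(n)$) is the number of such partitions in which the number of parts greater than the smallest part is even (resp. odd). $P_e^{(k)}(d,n)$ (resp. $P_o^{(k)}(d,n)$) is the number of partitions of $n$ into an even (resp. odd) number of distinct positive parts, none exceeding $k-1$. *)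

theory Defs
  imports Main "HOL-Library.Multiset"
begin

(* Partitions of n into non-negative parts (0 allowed), as multisets of naturals,
   in which the smallest part appears exactly k times and no other part is repeated. *)
definition D_parts :: "nat \<Rightarrow> nat \<Rightarrow> nat multiset set" where
  "D_parts k n = {p. p \<noteq> {#} \<and> sum_mset p = n
      \<and> count p (Min (set_mset p)) = k
      \<and> (\<forall>x \<in># p. x \<noteq> Min (set_mset p) \<longrightarrow> count p x = 1)}"

definition parts_above_min :: "nat multiset \<Rightarrow> nat" where
  "parts_above_min p = size (filter_mset (\<lambda>x. Min (set_mset p) < x) p)"

definition D_e :: "nat \<Rightarrow> nat \<Rightarrow> nat" where
  "D_e k n = card {p \<in> D_parts k n. even (parts_above_min p)}"

definition D_o :: "nat \<Rightarrow> nat \<Rightarrow> nat" where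
  "D_o k n = card {p \<in> D_parts k n. odd (parts_above_min p)}"

definition P_e :: "nat \<Rightarrow> nat \<Rightarrow> nat" where
  "P_e k n = card {S. S \<subseteq> {1..k-1} \<and> \<Sum>S = n \<and> even (card S)}"

definition P_o :: "nat \<Rightarrow> nat \<Rightarrow> nat" where
  "P_o k n = card {S. S \<subseteq> {1..k-1} \<and> \<Sum>S = n \<and> odd (card S)}"

end

theory Submission
  imports Defs "HOL-Computational_Algebra.Formal_Power_Series"
begin

unbundle fps_syntax



definition tri :: "nat \<Rightarrow> nat" where "tri k = k * (k + 1) div 2"

lemma tri2: "2 * tri k = k * (k + 1)"
  unfolding tri_def by simp

lemma tri_Suc: "tri (Suc k) = tri k + Suc k"
  unfolding tri_def by (induction k) auto

definition TT :: "nat \<Rightarrow> nat \<Rightarrow> int fps" where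
  "TT n k = fps_const ((-1)^k) * fps_X^(n*k + tri k) * (\<Prod>j\<in>{k<..n}. 1 - fps_X^j)"

definition UU :: "nat \<Rightarrow> nat \<Rightarrow> int fps" where
  "UU n k = fps_const ((-1)^k) * fps_X^(n*k + tri k) * (\<Prod>j\<in>{k..n}. 1 - fps_X^j)"

definition LL :: "nat \<Rightarrow> int fps" where "LL n = (\<Sum>k\<le>n. TT n k)"

definition p1 :: "nat \<Rightarrow> nat" where "p1 j = j * (3*j+1) div 2"
definition p2 :: "nat \<Rightarrow> nat" where "p2 j = j * (3*j-1) div 2"

definition RR :: "nat \<Rightarrow> int fps" where
  "RR n = 1 + (\<Sum>j<n. fps_const ((-1)^(Suc j)) * (fps_X^(p1 (Suc j)) + fps_X^(p2 (Suc j))))"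

lemma p1_2: "2 * p1 j = j * (3*j+1)"
proof -
  have "j * (3*j+1) = j*(j+1) + 2*(j*j)" by (simp add: algebra_simps)
  then have "even (j * (3*j+1))" by simp
  then show ?thesis unfolding p1_def by simp
qed

lemma p2_2: "2 * p2 j = j * (3*j-1)"
proof (cases j)
  case 0 then show ?thesis by (simp add: p2_def)
next
  case (Suc i)
  have "j * (3*j-1) = (i+1)*(i+2) + 2*(i*(i+1))" using Suc by (simp add: algebra_simps)
  then have "even (j * (3*j-1))" by simp
  then show ?thesis unfolding p2_def by simp
qed

lemma TT_step:
  assumes "k \<le> n"
  shows "TT (Suc n) k - TT n k = UU n (Suc k) - UU n k"
proof -
  define P where "P = (\<Prod>j\<in>{k<..n}. 1 - fps_X^j :: int fps)"
  define c where "c = fps_const ((-1)^k) * fps_X^(n*k + tri k) * P"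
  have e1: "{k<..Suc n} = insert (Suc n) {k<..n}" using assms by auto
  have e2: "{k..n} = insert k {k<..n}" using assms by auto
  have e3: "{Suc k..n} = {k<..n}" by auto
  have "TT (Suc n) k = c * fps_X^k * (1 - fps_X^(Suc n))"
    unfolding TT_def c_def P_def e1 by (simp add: power_add algebra_simps)
  moreover have "TT n k = c" unfolding TT_def c_def P_def by simp
  moreover have "UU n (Suc k) = - c * fps_X^(Suc n + k)"
    unfolding UU_def c_def P_def e3 tri_Suc
    by (simp add: power_add algebra_simps fps_const_neg[symmetric] del: fps_const_neg)
  moreover have "UU n k = c * (1 - fps_X^k)"
    unfolding UU_def c_def P_def e2 by (simp add: algebra_simps)
  ultimately show ?thesis by (simp add: power_add algebra_simps)
qed

lemma LL_RR: "LL n = RR n"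
proof (induction n)
  case 0
  show ?case by (simp add: LL_def RR_def TT_def tri_def)
next
  case (Suc n)
  have "LL (Suc n) = (\<Sum>k\<le>n. TT (Suc n) k) + TT (Suc n) (Suc n)"
    unfolding LL_def by simp
  also have "(\<Sum>k\<le>n. TT (Suc n) k) = (\<Sum>k\<le>n. TT n k) + (\<Sum>k\<le>n. UU n (Suc k) - UU n k)"
    by (subst sum.distrib[symmetric]) (auto intro!: sum.cong simp: TT_step[symmetric])
  also have "(\<Sum>k\<le>n. UU n (Suc k) - UU n k) = UU n (Suc n) - UU n 0"
    using sum_telescope[of "\<lambda>k. - UU n k" n] by simp
  also have "UU n 0 = 0"
    unfolding UU_def by (auto simp: prod_zero_iff intro!: bexI[of _ 0])
  finally have "LL (Suc n) = RR n + UU n (Suc n) + TT (Suc n) (Suc n)"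
    using Suc by (simp add: LL_def)
  moreover have "UU n (Suc n) = fps_const ((-1)^(Suc n)) * fps_X^(p2 (Suc n))"
  proof -
    have "n * Suc n + tri (Suc n) = p2 (Suc n)"
      using tri2[of "Suc n"] p2_2[of "Suc n"] by (simp add: algebra_simps)
    then show ?thesis unfolding UU_def by simp
  qed
  moreover have "TT (Suc n) (Suc n) = fps_const ((-1)^(Suc n)) * fps_X^(p1 (Suc n))"
  proof -
    have "Suc n * Suc n + tri (Suc n) = p1 (Suc n)"
      using tri2[of "Suc n"] p1_2[of "Suc n"] by (simp add: algebra_simps)
    then show ?thesis unfolding TT_def by simp
  qed
  ultimately show ?case by (simp add: RR_def algebra_simps)
qed

definition h :: "nat set \<Rightarrow> nat \<Rightarrow> int" where
  "h A n = (\<Sum>S\<in>Pow A. if \<Sum>S = n then (-1)^card S else 0)"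

lemma h_insert:
  assumes "finite A" "x \<notin> A"
  shows "h (insert x A) n = h A n - (if x \<le> n then h A (n - x) else 0)"
proof -
  have fin: "finite (Pow A)" "finite (insert x ` Pow A)" using assms by auto
  have disj: "Pow A \<inter> insert x ` Pow A = {}" using assms by auto
  have inj: "inj_on (insert x) (Pow A)"
    unfolding inj_on_def using assms by (metis PowD insert_absorb insert_ident subsetD)
  have "h (insert x A) n = h A n + (\<Sum>S\<in>insert x ` Pow A. if \<Sum>S = n then (-1)^card S else 0)"
    unfolding h_def Pow_insert by (rule sum.union_disjoint[OF fin disj])
  also have "(\<Sum>S\<in>insert x ` Pow A. if \<Sum>S = n then (-1)^card S else 0)
      = (\<Sum>S\<in>Pow A. if x + \<Sum>S = n then - ((-1)^card S) else (0::int))"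
  proof -
    have "(\<Sum>S\<in>insert x ` Pow A. if \<Sum>S = n then (-1)^card S else (0::int))
       = (\<Sum>S\<in>Pow A. if \<Sum>(insert x S) = n then (-1)^card (insert x S) else (0::int))"
      by (subst sum.reindex[OF inj]) simp
    also have "\<dots> = (\<Sum>S\<in>Pow A. if x + \<Sum>S = n then - ((-1)^card S) else (0::int))"
    proof (rule sum.cong)
      fix S assume "S \<in> Pow A"
      then have "finite S" "x \<notin> S" using assms finite_subset by auto
      then show "(if \<Sum>(insert x S) = n then (-1)^card (insert x S) else (0::int))
        = (if x + \<Sum>S = n then - ((-1)^card S) else (0::int))" by simp
    qed simp
    finally show ?thesis .
  qed
  also have "\<dots> = - (if x \<le> n then h A (n - x) else 0)"
  proof (cases "x \<le> n")
    case True
    have "(\<Sum>S\<in>Pow A. if x + \<Sum>S = n then - ((-1)^card S) else (0::int))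
      = - (\<Sum>S\<in>Pow A. if \<Sum>S = n - x then (-1)^card S else 0)"
      unfolding sum_negf[symmetric] by (rule sum.cong) (use True in auto)
    then show ?thesis using True by (simp add: h_def)
  next
    case False
    have "(\<Sum>S\<in>Pow A. if x + \<Sum>S = n then - ((-1)^card S) else (0::int)) = 0"
      by (rule sum.neutral) (use False in auto)
    then show ?thesis using False by simp
  qed
  finally show ?thesis by simp
qed

lemma h_empty: "h {} n = (if n = 0 then 1 else 0)"
  unfolding h_def by simp

lemma h_prod:
  assumes "finite A"
  shows "(\<Prod>j\<in>A. 1 - fps_X^j :: int fps) $ n = h A n"
  using assms
proof (induction A arbitrary: n rule: finite_induct)
  case empty
  then show ?case by (simp add: h_empty)
next
  case (insert x A)
  have "(\<Prod>j\<in>insert x A. 1 - fps_X^j :: int fps) = (\<Prod>j\<in>A. 1 - fps_X^j) - fps_X^x * (\<Prod>j\<in>A. 1 - fps_X^j)"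
    using insert by (simp add: algebra_simps)
  then show ?case using insert by (simp add: fps_X_power_mult_nth h_insert not_less)
qed

lemma h_alt:
  assumes "finite A"
  shows "h A n = (\<Sum>S\<in>{S. S \<subseteq> A \<and> \<Sum>S = n}. (-1)^card S)"
proof -
  have "{S. S \<subseteq> A \<and> \<Sum>S = n} = {S\<in>Pow A. \<Sum>S = n}" by auto
  then have "(\<Sum>S\<in>{S. S \<subseteq> A \<and> \<Sum>S = n}. (-1)^card S) = (\<Sum>S\<in>{S\<in>Pow A. \<Sum>S = n}. (-1)^card S :: int)"
    by simp
  also have "\<dots> = h A n" unfolding h_def by (rule sum.inter_filter) (simp add: assms)
  finally show ?thesis by simp
qed

lemma elem_le_sum:
  fixes S :: "nat set"
  assumes "finite S" "x \<in> S" shows "x \<le> \<Sum>S"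
  using member_le_sum[of x S id] assms by simp

lemma h_restrict:
  assumes "finite A" "finite B" "A \<inter> {..n} = B \<inter> {..n}"
  shows "h A n = h B n"
proof -
  have "{S. S \<subseteq> A \<and> \<Sum>S = n} = {S. S \<subseteq> B \<and> \<Sum>S = n}"
  proof -
    have *: "S \<subseteq> C \<and> \<Sum>S = n \<longleftrightarrow> S \<subseteq> C \<inter> {..n} \<and> \<Sum>S = n" if "finite C" for S C
      using elem_le_sum[of S] finite_subset[OF _ that] by auto
    show ?thesis using *[OF assms(1)] *[OF assms(2)] assms(3) by auto
  qed
  then show ?thesis using assms h_alt by simp
qed

lemma coeff_LL:
  assumes "m \<le> n"
  shows "LL n $ m = h {1..n} m"
proof -
  have "LL n $ m = (\<Sum>k\<le>n. TT n k $ m)" unfolding LL_def fps_sum_nth ..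
  also have "\<dots> = TT n 0 $ m + (\<Sum>k\<in>{..n}-{0}. TT n k $ m)"
    by (rule sum.remove) auto
  also have "(\<Sum>k\<in>{..n}-{0}. TT n k $ m) = 0"
  proof (rule sum.neutral, rule ballI)
      fix k assume "k \<in> {..n} - {0}"
      then have "k \<ge> 1" by auto
      have "n * k \<ge> n" using \<open>k \<ge> 1\<close> by simp
      moreover have "tri k = tri (k-1) + k" using tri_Suc[of "k-1"] \<open>k \<ge> 1\<close> by simp
      ultimately have "m < n*k + tri k" using assms \<open>k \<ge> 1\<close> by linarith
      then show "TT n k $ m = 0" unfolding TT_def
        by (simp only: mult.assoc fps_mult_left_const_nth fps_X_power_mult_nth) simp
  qed
  also have "TT n 0 $ m = (\<Prod>j\<in>{1..n}. 1 - fps_X^j :: int fps) $ m"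
  proof -
    have "{0<..n} = {1..n}" by auto
    then show ?thesis unfolding TT_def by (simp add: tri_def)
  qed
  finally show ?thesis by (simp add: h_prod)
qed


lemma p1_mono: "i < j \<Longrightarrow> p1 i < p1 j"
proof -
  assume "i < j"
  then have "i * (3*i+1) < j * (3*j+1)" by (intro mult_strict_mono) auto
  then show ?thesis using p1_2[of i] p1_2[of j] by linarith
qed

lemma p2_mono: "i < j \<Longrightarrow> p2 i < p2 j"
proof -
  assume "i < j"
  then have "i * (3*i-1) < j * (3*j-1)" by (intro mult_strict_mono) auto
  then show ?thesis using p2_2[of i] p2_2[of j] by linarith
qed

lemma p1_inj: "p1 i = p1 j \<longleftrightarrow> i = j"
  by (metis linorder_neqE_nat p1_mono less_irrefl)

lemma p2_inj: "p2 i = p2 j \<longleftrightarrow> i = j"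
  by (metis linorder_neqE_nat p2_mono less_irrefl)

lemma p1_ne_p2: assumes "j \<ge> 1" shows "p1 i \<noteq> p2 j"
proof
  assume eq: "p1 i = p2 j"
  then have e: "i * (3*i+1) = j * (3*j-1)" using p1_2[of i] p2_2[of j] by linarith
  show False
  proof (cases "j \<le> i")
    case True
    then have "j * (3*j-1) \<le> i * (3*i-1)" by (intro mult_le_mono) auto
    also have "\<dots> < i * (3*i+1)" using True assms by (intro mult_strict_left_mono) auto
    finally show False using e by simp
  next
    case False
    then have "i * (3*i+1) < j * (3*j-1)" by (intro mult_strict_mono) auto
    then show False using e by simp
  qed
qed

lemma p1_ge: "j \<le> p1 j"
proof -
  have "2 * j \<le> j * (3*j+1)" by (cases j) auto
  then show ?thesis using p1_2[of j] by linarith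
qed

lemma p2_ge: "j \<le> p2 j"
proof -
  have "2 * j \<le> j * (3*j-1)" by (cases j) auto
  then show ?thesis using p2_2[of j] by linarith
qed

lemma RR_nth:
  assumes "m \<ge> 1"
  shows "RR n $ m = (\<Sum>j\<in>{1..n}. (-1)^j * ((if m = p1 j then 1 else 0) + (if m = p2 j then 1 else 0)))"
  using assms unfolding RR_def
  by (simp add: fps_sum_nth sum.atLeast1_atMost_eq algebra_simps del: power_Suc)

lemma RR_pent1:
  assumes "1 \<le> a" "p1 a \<le> n"
  shows "RR n $ (p1 a) = (-1)^a"
proof -
  have "p1 a \<ge> 1" using p1_ge[of a] assms by simp
  then have "RR n $ (p1 a) = (\<Sum>j\<in>{1..n}. (-1)^j * ((if p1 a = p1 j then 1 else 0) + (if p1 a = p2 j then 1 else 0)))"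
    by (rule RR_nth)
  also have "\<dots> = (\<Sum>j\<in>{1..n}. if j = a then (-1)^j else 0)"
    using assms by (intro sum.cong) (auto simp: p1_inj p1_ne_p2)
  also have "\<dots> = (-1)^a" using assms p1_ge[of a] by simp
  finally show ?thesis .
qed

lemma RR_pent2:
  assumes "1 \<le> a" "p2 a \<le> n"
  shows "RR n $ (p2 a) = (-1)^a"
proof -
  have "p2 a \<ge> 1" using p2_ge[of a] assms by simp
  then have "RR n $ (p2 a) = (\<Sum>j\<in>{1..n}. (-1)^j * ((if p2 a = p1 j then 1 else 0) + (if p2 a = p2 j then 1 else 0)))"
    by (rule RR_nth)
  also have "\<dots> = (\<Sum>j\<in>{1..n}. if j = a then (-1)^j else 0)"
  proof -
    have ne: "\<And>i. p2 a \<noteq> p1 i" using p1_ne_p2[OF assms(1)] by metis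
    show ?thesis using ne by (intro sum.cong) (simp_all add: p2_inj)
  qed
  also have "\<dots> = (-1)^a" using assms p2_ge[of a] by simp
  finally show ?thesis .
qed

lemma RR_nonpent:
  assumes "m \<ge> 1" "\<And>j. j \<ge> 1 \<Longrightarrow> m \<noteq> p1 j \<and> m \<noteq> p2 j"
  shows "RR n $ m = 0"
  unfolding RR_nth[OF assms(1)] using assms(2) by (intro sum.neutral) auto




definition g :: "nat \<Rightarrow> nat \<Rightarrow> int" where "g s m = h {s<..m} m"

definition E :: "nat \<Rightarrow> nat \<Rightarrow> int" where
  "E k n = (\<Sum>s\<le>n. if k*s \<le> n then g s (n - k*s) else 0)"

lemma g_rec: "g s m = g (Suc s) m - (if Suc s \<le> m then g (Suc s) (m - Suc s) else 0)"
proof (cases "s < m")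
  case True
  have e: "{s<..m} = insert (Suc s) {Suc s<..m}" using True by auto
  have "g s m = h {Suc s<..m} m - h {Suc s<..m} (m - Suc s)"
    unfolding g_def e using True by (subst h_insert) auto
  moreover have "h {Suc s<..m} (m - Suc s) = g (Suc s) (m - Suc s)"
    unfolding g_def by (rule h_restrict) auto
  ultimately show ?thesis using True by (simp add: g_def)
next
  case False
  then have "{s<..m} = {}" "{Suc s<..m} = {}" by auto
  then show ?thesis using False by (simp add: g_def)
qed

lemma g_big: "m \<le> s \<Longrightarrow> g s m = (if m = 0 then 1 else 0)"
proof -
  assume "m \<le> s"
  then have "{s<..m} = {}" by auto
  then show ?thesis by (simp add: g_def h_empty)
qed

lemma E1: "E 1 n = (if n = 0 then 1 else 0)"
proof -
  have tele: "t \<le> n \<Longrightarrow> (\<Sum>s\<le>t. g s (n - s)) = g t n" for t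
  proof (induction t)
    case 0 then show ?case by simp
  next
    case (Suc t)
    then have "(\<Sum>s\<le>Suc t. g s (n - s)) = g t n + g (Suc t) (n - Suc t)" by simp
    also have "\<dots> = g (Suc t) n" using g_rec[of t n] Suc.prems by simp
    finally show ?case .
  qed
  have "E 1 n = (\<Sum>s\<le>n. g s (n - s))" unfolding E_def by (intro sum.cong) auto
  also have "\<dots> = g n n" by (rule tele) simp
  finally show ?thesis by (simp add: g_big)
qed

lemma E_rec:
  assumes "k \<ge> 1"
  shows "E (Suc k) n = E k n - (if k \<le> n then E k (n - k) else 0)"
proof -
  define c where "c s = (if k*s \<le> n then g s (n - k*s) else 0)" for s
  define d where "d s = (if Suc k*s \<le> n then g s (n - Suc k*s) else 0)" for s
  define e where "e s = (if k*s \<le> n - k \<and> k \<le> n then g s (n - k - k*s) else 0)" for s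
  have cd: "c (Suc s) - d (Suc s) = e s" for s
  proof (cases "k * Suc s \<le> n")
    case True
    define M where "M = n - k * Suc s"
    have "g s M = g (Suc s) M - (if Suc s \<le> M then g (Suc s) (M - Suc s) else 0)" by (rule g_rec)
    moreover have "(Suc s \<le> M) = (Suc k * Suc s \<le> n)" using True unfolding M_def by auto
    moreover have "M - Suc s = n - Suc k * Suc s" unfolding M_def by simp
    moreover have "M = n - k - k * s" unfolding M_def by (simp add: algebra_simps)
    moreover have "k * s \<le> n - k \<and> k \<le> n" using True by (simp add: algebra_simps)
    ultimately show ?thesis using True unfolding c_def d_def e_def M_def by simp
  next
    case False
    then have "\<not> Suc k * Suc s \<le> n" by (meson le_trans mult_le_mono1 le_SucI order_refl)
    moreover have "\<not> (k * s \<le> n - k \<and> k \<le> n)" using False by (auto simp: algebra_simps)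
    ultimately have "d (Suc s) = 0" "e s = 0" unfolding d_def e_def by auto
    moreover have "c (Suc s) = 0" using False unfolding c_def by auto
    ultimately show ?thesis by simp
  qed
  have "E k n - E (Suc k) n = (\<Sum>s\<le>n. c s - d s)"
    unfolding E_def c_def d_def by (simp add: sum_subtractf)
  also have "\<dots> = (\<Sum>s<Suc n. c s - d s)" by (simp add: lessThan_Suc_atMost)
  also have "\<dots> = (c 0 - d 0) + (\<Sum>s<n. c (Suc s) - d (Suc s))" by (rule sum.lessThan_Suc_shift)
  also have "c 0 - d 0 = 0" unfolding c_def d_def by simp
  also have "(\<Sum>s<n. c (Suc s) - d (Suc s)) = (\<Sum>s<n. e s)" by (simp add: cd)
  also have "(\<Sum>s<n. e s) = (if k \<le> n then E k (n - k) else 0)"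
  proof (cases "k \<le> n")
    case True
    have "(\<Sum>s<n. e s) = (\<Sum>s\<le>n-k. e s)"
    proof (rule sum.mono_neutral_right)
      show "{..n - k} \<subseteq> {..<n}" using True assms by auto
      show "\<forall>i\<in>{..<n} - {..n - k}. e i = 0"
      proof
        fix i assume "i \<in> {..<n} - {..n - k}"
        then have "i > n - k" by auto
        moreover have "i \<le> k * i" using assms by simp
        ultimately have "\<not> k * i \<le> n - k" by linarith
        then show "e i = 0" unfolding e_def by auto
      qed
    qed auto
    also have "\<dots> = E k (n - k)" unfolding E_def e_def using True by (intro sum.cong) auto
    finally show ?thesis using True by simp
  next
    case False
    then show ?thesis unfolding e_def by simp
  qed
  finally show ?thesis by simp
qed

lemma E_h: "k \<ge> 1 \<Longrightarrow> E k n = h {1..k-1} n"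
proof (induction k arbitrary: n rule: dec_induct)
  case base
  then show ?case using E1[of n] by (simp add: h_empty)
next
  case (step k)
  have "{1..Suc k - 1} = insert k {1..k-1}" using step by auto
  then have "h {1..Suc k - 1} n = h {1..k-1} n - (if k \<le> n then h {1..k-1} (n - k) else 0)"
  proof -
    have "k \<notin> {1..k-1}" using step by auto
    then show ?thesis using h_insert[of "{1..k-1}" k n] \<open>{1..Suc k - 1} = insert k {1..k-1}\<close> by simp
  qed
  then show ?case using step E_rec[of k n] by simp
qed



definition Pairs :: "nat \<Rightarrow> nat \<Rightarrow> (nat \<times> nat set) set" where
  "Pairs k n = {(s,T). T \<subseteq> {s<..n} \<and> k*s + \<Sum>T = n}"

definition phi :: "nat \<Rightarrow> nat \<times> nat set \<Rightarrow> nat multiset" where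
  "phi k = (\<lambda>(s,T). replicate_mset k s + mset_set T)"

definition psi :: "nat multiset \<Rightarrow> nat \<times> nat set" where
  "psi p = (Min (set_mset p), set_mset p - {Min (set_mset p)})"

lemma phi_props:
  assumes "k \<ge> 1" "finite T" "\<forall>x\<in>T. s < x"
  shows "set_mset (phi k (s,T)) = insert s T"
    and "Min (set_mset (phi k (s,T))) = s"
    and "psi (phi k (s,T)) = (s,T)"
    and "sum_mset (phi k (s,T)) = k*s + \<Sum>T"
    and "parts_above_min (phi k (s,T)) = card T"
    and "count (phi k (s,T)) s = k"
    and "\<forall>x \<in># phi k (s,T). x \<noteq> s \<longrightarrow> count (phi k (s,T)) x = 1"
proof -
  show 1: "set_mset (phi k (s,T)) = insert s T" using assms unfolding phi_def by auto
  have sT: "s \<notin> T" using assms by auto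
  show 2: "Min (set_mset (phi k (s,T))) = s" unfolding 1
    by (rule Min_eqI) (use assms in auto)
  show "psi (phi k (s,T)) = (s,T)" unfolding psi_def 2 unfolding 1 using sT by auto
  show "sum_mset (phi k (s,T)) = k*s + \<Sum>T"
  proof -
    have "sum_mset (mset_set T) = \<Sum>T" using assms(2) by (induction T rule: finite_induct) auto
    then show "sum_mset (phi k (s,T)) = k*s + \<Sum>T" by (simp add: phi_def)
  qed
  have "filter_mset (\<lambda>x. s < x) (phi k (s,T)) = mset_set T"
    by (rule multiset_eqI) (use assms in \<open>auto simp: phi_def count_mset_set'\<close>)
  then show "parts_above_min (phi k (s,T)) = card T"
    unfolding parts_above_min_def 2 by simp
  show "count (phi k (s,T)) s = k" unfolding phi_def using sT by simp
  show "\<forall>x \<in># phi k (s,T). x \<noteq> s \<longrightarrow> count (phi k (s,T)) x = 1"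
    unfolding phi_def using assms by auto
qed

lemma bij_phi:
  assumes "k \<ge> 1"
  shows "bij_betw (phi k) (Pairs k n) (D_parts k n)"
proof (rule bij_betw_byWitness[where f' = psi])
  show "\<forall>a\<in>Pairs k n. psi (phi k a) = a"
  proof
    fix a assume "a \<in> Pairs k n"
    then obtain s T where a: "a = (s,T)" "T \<subseteq> {s<..n}" unfolding Pairs_def by auto
    then have "finite T" using finite_subset by blast
    moreover have "\<forall>x\<in>T. s < x" using a by auto
    ultimately show "psi (phi k a) = a" using phi_props(3)[OF assms] a by auto
  qed
  show "phi k ` Pairs k n \<subseteq> D_parts k n"
  proof
    fix p assume "p \<in> phi k ` Pairs k n"
    then obtain s T where a: "p = phi k (s,T)" "T \<subseteq> {s<..n}" "k*s + \<Sum>T = n"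
      unfolding Pairs_def by auto
    then have f: "finite T" using finite_subset by blast
    have ns: "\<forall>x\<in>T. s < x" using a by auto
    have "p \<noteq> {#}" using phi_props(1)[OF assms f ns] a by auto
    then show "p \<in> D_parts k n" unfolding D_parts_def
      using phi_props[OF assms f ns] a by auto
  qed
  show "\<forall>p\<in>D_parts k n. phi k (psi p) = p"
  proof
    fix p assume p: "p \<in> D_parts k n"
    define s where "s = Min (set_mset p)"
    have ps: "psi p = (s, set_mset p - {s})" unfolding psi_def s_def ..
    have ne: "set_mset p \<noteq> {}" using p unfolding D_parts_def by auto
    have cs: "count p s = k" using p unfolding D_parts_def s_def by auto
    have co: "\<And>x. x \<in># p \<Longrightarrow> x \<noteq> s \<Longrightarrow> count p x = 1" using p unfolding D_parts_def s_def by auto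
    show "phi k (psi p) = p" unfolding ps phi_def
    proof (rule multiset_eqI)
      fix x
      show "count (case (s, set_mset p - {s}) of (s, T) \<Rightarrow> replicate_mset k s + mset_set T) x = count p x"
        using cs co by (cases "x = s"; cases "x \<in># p") (auto simp: count_mset_set' not_in_iff)
    qed
  qed
  show "psi ` D_parts k n \<subseteq> Pairs k n"
  proof
    fix a assume "a \<in> psi ` D_parts k n"
    then obtain p where p: "p \<in> D_parts k n" "a = psi p" by auto
    define s where "s = Min (set_mset p)"
    define T where "T = set_mset p - {s}"
    have a: "a = (s,T)" unfolding p psi_def s_def T_def ..
    have ne: "set_mset p \<noteq> {}" using p unfolding D_parts_def by auto
    have fT: "finite T" unfolding T_def by simp
    have ns: "\<forall>x\<in>T. s < x" unfolding T_def s_def using ne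
      by (metis DiffE Min_le finite_set_mset insertI1 le_neq_implies_less)
    have cs: "count p s = k" using p unfolding D_parts_def s_def by auto
    have co: "\<And>x. x \<in># p \<Longrightarrow> x \<noteq> s \<Longrightarrow> count p x = 1" using p unfolding D_parts_def s_def by auto
    have pe: "phi k (s,T) = p" unfolding phi_def T_def
    proof (rule multiset_eqI)
      fix x
      show "count (case (s, set_mset p - {s}) of (s, T) \<Rightarrow> replicate_mset k s + mset_set T) x = count p x"
        using cs co by (cases "x = s"; cases "x \<in># p") (auto simp: count_mset_set' not_in_iff)
    qed
    have sm: "k*s + \<Sum>T = n" using phi_props(4)[OF assms fT ns] pe p unfolding D_parts_def by simp
    have "T \<subseteq> {s<..n}"
    proof
      fix x assume "x \<in> T"
      then have "x \<le> \<Sum>T" using elem_le_sum fT by blast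
      then show "x \<in> {s<..n}" using sm ns \<open>x \<in> T\<close> by auto
    qed
    then show "a \<in> Pairs k n" unfolding a Pairs_def using sm by auto
  qed
qed

lemma signed_card:
  assumes "finite A"
  shows "int (card {p\<in>A. even (f p)}) - int (card {p\<in>A. odd (f p)}) = (\<Sum>p\<in>A. (-1::int)^(f p))"
proof -
  have "(\<Sum>p\<in>A. (-1::int)^(f p)) = (\<Sum>p\<in>A. (if even (f p) then 1 else 0) - (if odd (f p) then 1 else 0))"
    by (intro sum.cong) auto
  also have "\<dots> = (\<Sum>p\<in>A. if even (f p) then 1 else 0) - (\<Sum>p\<in>A. if odd (f p) then 1 else (0::int))"
    by (rule sum_subtractf)
  also have "(\<Sum>p\<in>A. if even (f p) then 1 else (0::int)) = int (card {p\<in>A. even (f p)})"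
    using assms by (simp add: sum.inter_filter[symmetric])
  also have "(\<Sum>p\<in>A. if odd (f p) then 1 else (0::int)) = int (card {p\<in>A. odd (f p)})"
    using assms by (simp add: sum.inter_filter[symmetric])
  finally show ?thesis by simp
qed

lemma D_E:
  assumes "k \<ge> 1"
  shows "int (D_e k n) - int (D_o k n) = E k n"
proof -
  have finP: "finite (Pairs k n)"
  proof (rule finite_subset)
    show "Pairs k n \<subseteq> {..n} \<times> Pow {..n}"
    proof
      fix a assume "a \<in> Pairs k n"
      then obtain s T where a: "a = (s,T)" "T \<subseteq> {s<..n}" "k*s + \<Sum>T = n" unfolding Pairs_def by auto
      have "s \<le> k*s" using assms by simp
      then have "s \<le> n" using a(3) by linarith
      then show "a \<in> {..n} \<times> Pow {..n}" using a by auto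
    qed
  qed auto
  have bij: "bij_betw (phi k) (Pairs k n) (D_parts k n)" by (rule bij_phi[OF assms])
  then have finD: "finite (D_parts k n)" using finP bij_betw_finite by blast
  have "int (D_e k n) - int (D_o k n) = (\<Sum>p\<in>D_parts k n. (-1::int)^(parts_above_min p))"
    unfolding D_e_def D_o_def by (rule signed_card[OF finD])
  also have "\<dots> = (\<Sum>a\<in>Pairs k n. (-1::int)^(parts_above_min (phi k a)))"
    by (rule sum.reindex_bij_betw[OF bij, symmetric])
  also have "\<dots> = (\<Sum>a\<in>Pairs k n. (-1::int)^(card (snd a)))"
  proof (rule sum.cong)
    fix a assume "a \<in> Pairs k n"
    then obtain s T where a: "a = (s,T)" "T \<subseteq> {s<..n}" unfolding Pairs_def by auto
    then have "finite T" "\<forall>x\<in>T. s < x" using finite_subset by auto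
    then show "(-1::int)^(parts_above_min (phi k a)) = (-1)^(card (snd a))"
      using phi_props(5)[OF assms] a by simp
  qed simp
  also have "Pairs k n = Sigma {..n} (\<lambda>s. {T. T \<subseteq> {s<..n} \<and> k*s + \<Sum>T = n})"
  proof -
    have "s \<le> n" if "k*s + \<Sum>T = n" for s and T :: "nat set"
    proof -
      have "s \<le> k*s" using assms by simp
      then show ?thesis using that by linarith
    qed
    then show ?thesis unfolding Pairs_def by auto
  qed
  also have "(\<Sum>a\<in>Sigma {..n} (\<lambda>s. {T. T \<subseteq> {s<..n} \<and> k*s + \<Sum>T = n}). (-1::int)^(card (snd a)))
      = (\<Sum>s\<le>n. \<Sum>T\<in>{T. T \<subseteq> {s<..n} \<and> k*s + \<Sum>T = n}. (-1::int)^(card T))"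
  proof -
    have "(\<Sum>a\<in>Sigma {..n} (\<lambda>s. {T. T \<subseteq> {s<..n} \<and> k*s + \<Sum>T = n}). (-1::int)^(card (snd a)))
      = (\<Sum>(s,T)\<in>Sigma {..n} (\<lambda>s. {T. T \<subseteq> {s<..n} \<and> k*s + \<Sum>T = n}). (-1::int)^(card T))"
      by (rule sum.cong) auto
    also have "\<dots> = (\<Sum>s\<le>n. \<Sum>T\<in>{T. T \<subseteq> {s<..n} \<and> k*s + \<Sum>T = n}. (-1::int)^(card T))"
    proof (rule sum.Sigma[symmetric])
      show "\<forall>s\<in>{..n}. finite {T. T \<subseteq> {s<..n} \<and> k*s + \<Sum>T = n}"
        by (auto intro: finite_subset[of _ "Pow {_<..n}"])
    qed simp
    finally show ?thesis .
  qed
  also have "\<dots> = E k n" unfolding E_def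
  proof (rule sum.cong)
    fix s assume "s \<in> {..n}"
    show "(\<Sum>T\<in>{T. T \<subseteq> {s<..n} \<and> k*s + \<Sum>T = n}. (-1::int)^(card T))
        = (if k*s \<le> n then g s (n - k*s) else 0)"
    proof (cases "k*s \<le> n")
      case True
      have "{T. T \<subseteq> {s<..n} \<and> k*s + \<Sum>T = n} = {T. T \<subseteq> {s<..n} \<and> \<Sum>T = n - k*s}"
        using True by auto
      then have "(\<Sum>T\<in>{T. T \<subseteq> {s<..n} \<and> k*s + \<Sum>T = n}. (-1::int)^(card T)) = h {s<..n} (n - k*s)"
        by (simp add: h_alt)
      also have "\<dots> = g s (n - k*s)" unfolding g_def by (rule h_restrict) auto
      finally show ?thesis using True by simp
    next
      case False
      then have "{T. T \<subseteq> {s<..n} \<and> k*s + \<Sum>T = n} = {}" by auto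
      then show ?thesis using False by simp
    qed
  qed simp
  finally show ?thesis .
qed



lemma p1_int: "2 * int (p1 a) = int a * (3 * int a + 1)"
proof -
  have "int (2 * p1 a) = int (a * (3*a+1))" using p1_2[of a] by simp
  then show ?thesis by (simp add: algebra_simps)
qed

lemma p2_int: "2 * int (p2 a) = int a * (3 * int a - 1)"
proof (cases a)
  case 0 then show ?thesis by (simp add: p2_def)
next
  case (Suc b)
  have "int (2 * p2 a) = int (a * (3*a-1))" using p2_2[of a] by simp
  also have "int (a * (3*a-1)) = int a * (3 * int a - 1)" using Suc by (simp add: of_nat_diff algebra_simps)
  finally show ?thesis by simp
qed

lemma pent_int:
  fixes m :: int
  assumes "2 * int n = m * (3*m+1) \<or> 2 * int n = m * (3*m-1)" "n \<ge> 1"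
  shows "nat \<bar>m\<bar> \<ge> 1 \<and> (n = p1 (nat \<bar>m\<bar>) \<or> n = p2 (nat \<bar>m\<bar>))"
proof -
  define a where "a = nat \<bar>m\<bar>"
  have a0: "a \<ge> 1"
  proof (rule ccontr)
    assume "\<not> a \<ge> 1"
    then have "m = 0" unfolding a_def by simp
    then show False using assms by simp
  qed
  have "2 * int n = int a * (3 * int a + 1) \<or> 2 * int n = int a * (3 * int a - 1)"
  proof (cases "m \<ge> 0")
    case True
    then have "m = int a" unfolding a_def by simp
    then show ?thesis using assms(1) by simp
  next
    case False
    then have "m = - int a" unfolding a_def by simp
    then show ?thesis using assms(1) by (auto simp: algebra_simps)
  qed
  then have "n = p1 a \<or> n = p2 a" using p1_int[of a] p2_int[of a] by auto
  then show ?thesis using a0 unfolding a_def by simp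
qed

lemma P_h: "int (P_e k n) - int (P_o k n) = h {1..k-1} n"
proof -
  have fin: "finite {S. S \<subseteq> {1..k-1} \<and> \<Sum>S = n}" by (rule finite_subset[of _ "Pow {1..k-1}"]) auto
  have "int (P_e k n) - int (P_o k n)
     = int (card {S\<in>{S. S \<subseteq> {1..k-1} \<and> \<Sum>S = n}. even (card S)})
     - int (card {S\<in>{S. S \<subseteq> {1..k-1} \<and> \<Sum>S = n}. odd (card S)})"
    unfolding P_e_def P_o_def by (simp add: conj_assoc)
  also have "\<dots> = (\<Sum>S\<in>{S. S \<subseteq> {1..k-1} \<and> \<Sum>S = n}. (-1)^card S)"
    by (rule signed_card[OF fin])
  also have "\<dots> = h {1..k-1} n" by (simp add: h_alt)
  finally show ?thesis .
qed

theorem theorem8: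
  fixes k n :: nat
  assumes "k \<ge> 1" and "n \<ge> 1"
  shows "(\<forall>m::int. (1 \<le> n \<and> n \<le> k - 1 \<and>
              (2 * int n = m * (3 * m + 1) \<or> 2 * int n = m * (3 * m - 1)))
            \<longrightarrow> int (D_e k n) - int (D_o k n) = (-1) ^ nat \<bar>m\<bar>)
       \<and> (k - 1 < n \<and> 2 * n \<le> k * (k - 1)
            \<longrightarrow> int (D_e k n) - int (D_o k n) = int (P_e k n) - int (P_o k n))
       \<and> ((\<not> (\<exists>m::int. 1 \<le> n \<and> n \<le> k - 1 \<and>
              (2 * int n = m * (3 * m + 1) \<or> 2 * int n = m * (3 * m - 1))))
          \<and> \<not> (k - 1 < n \<and> 2 * n \<le> k * (k - 1))
            \<longrightarrow> int (D_e k n) - int (D_o k n) = 0)"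
proof -
  have DH: "int (D_e k n) - int (D_o k n) = h {1..k-1} n"
    using D_E[OF assms(1)] E_h[OF assms(1)] by simp
  have small: "h {1..k-1} n = RR (k-1) $ n" if "n \<le> k - 1"
    using coeff_LL[OF that] LL_RR by simp
  have part1: "int (D_e k n) - int (D_o k n) = (-1) ^ nat \<bar>m\<bar>"
    if "1 \<le> n \<and> n \<le> k - 1 \<and> (2 * int n = m * (3 * m + 1) \<or> 2 * int n = m * (3 * m - 1))" for m :: int
  proof -
    have le: "n \<le> k - 1" using that by simp
    have "nat \<bar>m\<bar> \<ge> 1 \<and> (n = p1 (nat \<bar>m\<bar>) \<or> n = p2 (nat \<bar>m\<bar>))"
      by (rule pent_int) (use that in simp_all)
    then have a: "nat \<bar>m\<bar> \<ge> 1" "n = p1 (nat \<bar>m\<bar>) \<or> n = p2 (nat \<bar>m\<bar>)" by auto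
    have r: "RR (k-1) $ n = (-1) ^ nat \<bar>m\<bar>"
    proof (cases "n = p1 (nat \<bar>m\<bar>)")
      case True
      then have "p1 (nat \<bar>m\<bar>) \<le> k - 1" using le by simp
      from RR_pent1[OF a(1) this] True show ?thesis by simp
    next
      case False
      then have e: "n = p2 (nat \<bar>m\<bar>)" using a by simp
      then have "p2 (nat \<bar>m\<bar>) \<le> k - 1" using le by simp
      from RR_pent2[OF a(1) this] e show ?thesis by simp
    qed
    show ?thesis using DH small[OF le] r by simp
  qed
  have part3: "int (D_e k n) - int (D_o k n) = 0"
    if np: "\<not> (\<exists>m::int. 1 \<le> n \<and> n \<le> k - 1 \<and>
              (2 * int n = m * (3 * m + 1) \<or> 2 * int n = m * (3 * m - 1)))"
    and nb: "\<not> (k - 1 < n \<and> 2 * n \<le> k * (k - 1))"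
  proof (cases "n \<le> k - 1")
    case True
    have "RR (k-1) $ n = 0"
    proof (rule RR_nonpent)
      show "1 \<le> n" by fact
      fix j :: nat assume "j \<ge> 1"
      show "n \<noteq> p1 j \<and> n \<noteq> p2 j"
      proof
        show "n \<noteq> p1 j"
        proof
          assume "n = p1 j"
          then have "2 * int n = int j * (3 * int j + 1)" using p1_int[of j] by simp
          then show False using np True assms(2) by blast
        qed
        show "n \<noteq> p2 j"
        proof
          assume "n = p2 j"
          then have "2 * int n = int j * (3 * int j - 1)" using p2_int[of j] by simp
          then show False using np True assms(2) by blast
        qed
      qed
    qed
    then show ?thesis using DH small[OF True] by simp
  next
    case False
    then have big: "k * (k - 1) < 2 * n" using nb by auto
    have "{S. S \<subseteq> {1..k-1} \<and> \<Sum>S = n} = {}"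
    proof (rule ccontr)
      assume "{S. S \<subseteq> {1..k-1} \<and> \<Sum>S = n} \<noteq> {}"
      then obtain S where S: "S \<subseteq> {1..k-1}" "\<Sum>S = n" by auto
      have "\<Sum>S \<le> \<Sum>{1..k-1}" using S(1) by (intro sum_mono2) auto
      also have "\<Sum>{1..k-1} = \<Sum>{0..k-1}"
      proof -
        have "{0..k-1} = insert 0 {1..k-1}" by auto
        then show ?thesis by simp
      qed
      also have "\<dots> = (k-1) * Suc (k-1) div 2" by (rule gauss_sum_nat)
      finally have "2 * n \<le> (k-1) * k" using S(2) assms(1) by simp
      then show False using big by (simp add: mult.commute)
    qed
    then have "h {1..k-1} n = 0" by (simp only: h_alt[OF finite_atLeastAtMost] sum.empty)
    then show ?thesis using DH by simp
  qed
  show ?thesis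
  proof (intro conjI allI impI)
    fix m :: int
    assume "1 \<le> n \<and> n \<le> k - 1 \<and> (2 * int n = m * (3 * m + 1) \<or> 2 * int n = m * (3 * m - 1))"
    then show "int (D_e k n) - int (D_o k n) = (-1) ^ nat \<bar>m\<bar>" by (rule part1)
  next
    show "int (D_e k n) - int (D_o k n) = int (P_e k n) - int (P_o k n)"
      using DH P_h[of k n] by simp
  next
    assume H: "\<not> (\<exists>m::int. 1 \<le> n \<and> n \<le> k - 1 \<and>
              (2 * int n = m * (3 * m + 1) \<or> 2 * int n = m * (3 * m - 1))) \<and>
          \<not> (k - 1 < n \<and> 2 * n \<le> k * (k - 1))"
    show "int (D_e k n) - int (D_o k n) = 0"
      by (rule part3) (use H in blast)+
  qed
qed


end
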